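(* Let $V$ be a finite set partitioned into $A$ and $B$, and for each $u\in V$ let $d_u\ge 1$ and $0\le\lambda_u\le d_u$ be integers. Let $(X_u)_{u\in V}$ be independent random variables with $X_u=d_u$ with probability $\lambda_u/(2d_u)$ and $X_u=0$ otherwise if $u\in B$, and $X_u=-d_u$ with probability $\lambda_u/(2d_u)$ and $X_u=0$ otherwise if $u\in A$. Let $(Y_u)_{u\in V}$ be independent random variables with $Y_u=\lambda_u$ with probability $1/2$ and $Y_u=0$ otherwise if $u\in B$, and $Y_u=-d_u$ with probability $\lambda_u/(2d_u)$ and $Y_u=0$ otherwise if $u\in A$. Let $f$ be a concave and continuous function (defined on an interval containing all possible values of the sums below). Then $\mathbf{E}\big[f\big(\sum_{u\in V}X_u\big)\big]\le\mathbf{E}\big[f\big(\sum_{u\in V}Y_u\big)\big]$. *)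

theory Defs
  imports "HOL-Analysis.Analysis" "HOL-Probability.Probability"
begin

definition Xdist :: "'a set \<Rightarrow> ('a \<Rightarrow> int) \<Rightarrow> ('a \<Rightarrow> int) \<Rightarrow> 'a \<Rightarrow> real pmf" where
  "Xdist B d lam u =
     map_pmf (\<lambda>b. if b then (if u \<in> B then real_of_int (d u) else - real_of_int (d u)) else 0)
             (bernoulli_pmf (real_of_int (lam u) / (2 * real_of_int (d u))))"

definition Ydist :: "'a set \<Rightarrow> ('a \<Rightarrow> int) \<Rightarrow> ('a \<Rightarrow> int) \<Rightarrow> 'a \<Rightarrow> real pmf" where
  "Ydist B d lam u =
     (if u \<in> B then map_pmf (\<lambda>b. if b then real_of_int (lam u) else 0) (bernoulli_pmf (1/2))
      else map_pmf (\<lambda>b. if b then - real_of_int (d u) else 0)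
             (bernoulli_pmf (real_of_int (lam u) / (2 * real_of_int (d u)))))"

end

theory Submission
  imports Defs
begin


lemma expect_sum:
  fixes g :: "'a \<Rightarrow> real"
  assumes "finite (set_pmf p)"
  shows "measure_pmf.expectation p g = (\<Sum>x\<in>set_pmf p. g x * pmf p x)"
  by (rule integral_measure_pmf_real) (auto simp: assms)

lemma expect_pair:
  fixes g :: "'a \<times> 'b \<Rightarrow> real"
  assumes "finite (set_pmf p)" "finite (set_pmf q)"
  shows "measure_pmf.expectation (pair_pmf p q) g
       = measure_pmf.expectation p (\<lambda>x. measure_pmf.expectation q (\<lambda>y. g (x,y)))"
proof -
  have "measure_pmf.expectation (pair_pmf p q) g = (\<Sum>z\<in>set_pmf p \<times> set_pmf q. g z * pmf (pair_pmf p q) z)"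
    by (rule integral_measure_pmf_real) (auto simp: assms)
  also have "\<dots> = (\<Sum>x\<in>set_pmf p. \<Sum>y\<in>set_pmf q. g (x,y) * (pmf p x * pmf q y))"
    unfolding sum.cartesian_product by (intro sum.cong refl) (auto simp add: pmf_pair)
  also have "\<dots> = (\<Sum>x\<in>set_pmf p. (\<Sum>y\<in>set_pmf q. g (x,y) * pmf q y) * pmf p x)"
    by (simp add: sum_distrib_left sum_distrib_right mult_ac)
  also have "\<dots> = measure_pmf.expectation p (\<lambda>x. \<Sum>y\<in>set_pmf q. g (x,y) * pmf q y)"
    by (rule expect_sum[symmetric]) (rule assms)
  also have "\<dots> = measure_pmf.expectation p (\<lambda>x. measure_pmf.expectation q (\<lambda>y. g (x,y)))"
    using expect_sum[OF assms(2)] by simp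
  finally show ?thesis .
qed

lemma expect_swap:
  fixes g :: "'a \<Rightarrow> 'b \<Rightarrow> real"
  assumes "finite (set_pmf p)" "finite (set_pmf q)"
  shows "measure_pmf.expectation p (\<lambda>x. measure_pmf.expectation q (\<lambda>y. g x y))
       = measure_pmf.expectation q (\<lambda>y. measure_pmf.expectation p (\<lambda>x. g x y))"
proof -
  have "measure_pmf.expectation p (\<lambda>x. measure_pmf.expectation q (\<lambda>y. g x y))
      = (\<Sum>x\<in>set_pmf p. (\<Sum>y\<in>set_pmf q. g x y * pmf q y) * pmf p x)"
    using expect_sum[OF assms(1)] expect_sum[OF assms(2)] by simp
  also have "\<dots> = (\<Sum>y\<in>set_pmf q. (\<Sum>x\<in>set_pmf p. g x y * pmf p x) * pmf q y)"
    by (simp add: sum_distrib_left sum_distrib_right mult_ac sum.swap[of _ "set_pmf p"])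
  also have "\<dots> = measure_pmf.expectation q (\<lambda>y. measure_pmf.expectation p (\<lambda>x. g x y))"
    using expect_sum[OF assms(1)] expect_sum[OF assms(2)] by simp
  finally show ?thesis .
qed

lemma expect_mono:
  fixes g h :: "'a \<Rightarrow> real"
  assumes "finite (set_pmf p)" "\<And>x. x \<in> set_pmf p \<Longrightarrow> g x \<le> h x"
  shows "measure_pmf.expectation p g \<le> measure_pmf.expectation p h"
  unfolding expect_sum[OF assms(1)]
  by (intro sum_mono mult_right_mono assms) auto

lemma finite_set_Pi_pmf:
  assumes "finite A" "\<And>u. u \<in> A \<Longrightarrow> finite (set_pmf (p u))"
  shows "finite (set_pmf (Pi_pmf A dflt p))"
  using assms
proof (induction A rule: finite_induct)
  case empty then show ?case by simp
next
  case (insert a A)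
  then show ?case by (simp add: Pi_pmf_insert)
qed



lemma sum_bounds_Pi:
  fixes Q :: "'a \<Rightarrow> real pmf"
  assumes "finite W" "\<And>u x. u \<in> W \<Longrightarrow> x \<in> set_pmf (Q u) \<Longrightarrow> lo u \<le> x \<and> x \<le> hi u"
    and "y \<in> set_pmf (Pi_pmf W 0 Q)"
  shows "(\<Sum>u\<in>W. lo u) \<le> (\<Sum>u\<in>W. y u) \<and> (\<Sum>u\<in>W. y u) \<le> (\<Sum>u\<in>W. hi u)"
proof -
  have "\<And>u. u \<in> W \<Longrightarrow> y u \<in> set_pmf (Q u)"
    using set_Pi_pmf_subset'[OF assms(1), of 0 Q] assms(3) by (auto simp: PiE_dflt_def)
  with assms(2) show ?thesis by (auto intro!: sum_mono)
qed

lemma main_ind: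
  fixes P Q :: "'a \<Rightarrow> real pmf" and f :: "real \<Rightarrow> real"
  assumes "finite W" and I: "is_interval I"
    and fin: "\<And>u. u \<in> W \<Longrightarrow> finite (set_pmf (P u)) \<and> finite (set_pmf (Q u))"
    and bP: "\<And>u x. u \<in> W \<Longrightarrow> x \<in> set_pmf (P u) \<Longrightarrow> lo u \<le> x \<and> x \<le> hi u"
    and bQ: "\<And>u x. u \<in> W \<Longrightarrow> x \<in> set_pmf (Q u) \<Longrightarrow> lo u \<le> x \<and> x \<le> hi u"
    and lh: "\<And>u. u \<in> W \<Longrightarrow> lo u \<le> hi u"
    and one: "\<And>u c. u \<in> W \<Longrightarrow> c + lo u \<in> I \<Longrightarrow> c + hi u \<in> I \<Longrightarrow>
        measure_pmf.expectation (P u) (\<lambda>t. f (c + t)) \<le> measure_pmf.expectation (Q u) (\<lambda>t. f (c + t))"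
  shows "s + (\<Sum>u\<in>W. lo u) \<in> I \<Longrightarrow> s + (\<Sum>u\<in>W. hi u) \<in> I \<Longrightarrow>
     measure_pmf.expectation (Pi_pmf W 0 P) (\<lambda>x. f (s + (\<Sum>u\<in>W. x u)))
     \<le> measure_pmf.expectation (Pi_pmf W 0 Q) (\<lambda>x. f (s + (\<Sum>u\<in>W. x u)))"
  using assms(1) fin bP bQ lh one
proof (induction W arbitrary: s rule: finite_induct)
  case empty
  then show ?case by simp
next
  case (insert a W)
  have I1: "\<And>a b x. a \<in> I \<Longrightarrow> b \<in> I \<Longrightarrow> a \<le> x \<Longrightarrow> x \<le> b \<Longrightarrow> x \<in> I"
    using I unfolding is_interval_1 by blast
  have finPW: "finite (set_pmf (Pi_pmf W 0 P))" and finQW: "finite (set_pmf (Pi_pmf W 0 Q))"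
    using insert.prems(3) by (auto intro!: finite_set_Pi_pmf insert.hyps)
  have finPa: "finite (set_pmf (P a))" and finQa: "finite (set_pmf (Q a))"
    using insert.prems(3) by auto
  have lhW: "(\<Sum>u\<in>W. lo u) \<le> (\<Sum>u\<in>W. hi u)" using insert.prems(6) by (auto intro!: sum_mono)
  have lha: "lo a \<le> hi a" using insert.prems(6) by auto
  have s1: "s + lo a + (\<Sum>u\<in>W. lo u) \<in> I" and s2: "s + hi a + (\<Sum>u\<in>W. hi u) \<in> I"
    using insert.prems(1,2) insert.hyps by (simp_all add: add.assoc)
  have upd0: "(\<Sum>u\<in>W. (x(a:=t)) u) = (\<Sum>u\<in>W. x u)" for x :: "'a \<Rightarrow> real" and t
    using insert.hyps by (intro sum.cong) auto
  have upd: "(\<Sum>u\<in>insert a W. (x(a:=t)) u) = t + (\<Sum>u\<in>W. x u)" for x :: "'a \<Rightarrow> real" and t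
    using insert.hyps upd0[of x t] by (subst sum.insert) auto
  have decomp: "measure_pmf.expectation (Pi_pmf (insert a W) 0 R) (\<lambda>x. f (s + (\<Sum>u\<in>insert a W. x u)))
      = measure_pmf.expectation (R a) (\<lambda>t. measure_pmf.expectation (Pi_pmf W 0 R) (\<lambda>x. f (s + t + (\<Sum>u\<in>W. x u))))"
    if "finite (set_pmf (R a))" "finite (set_pmf (Pi_pmf W 0 R))" for R :: "'a \<Rightarrow> real pmf"
    using that insert.hyps
    apply (subst Pi_pmf_insert, simp, simp)
    apply (subst integral_map_pmf)
    apply (subst expect_pair, assumption, assumption)
    apply (simp only: case_prod_conv upd add.assoc)
    done
  have "measure_pmf.expectation (Pi_pmf (insert a W) 0 P) (\<lambda>x. f (s + (\<Sum>u\<in>insert a W. x u)))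
      = measure_pmf.expectation (P a) (\<lambda>t. measure_pmf.expectation (Pi_pmf W 0 P) (\<lambda>x. f (s + t + (\<Sum>u\<in>W. x u))))"
    by (rule decomp[OF finPa finPW])
  also have "\<dots> \<le> measure_pmf.expectation (P a) (\<lambda>t. measure_pmf.expectation (Pi_pmf W 0 Q) (\<lambda>x. f (s + t + (\<Sum>u\<in>W. x u))))"
  proof (rule expect_mono[OF finPa])
    fix t assume t: "t \<in> set_pmf (P a)"
    then have "lo a \<le> t" "t \<le> hi a" using insert.prems(4) by auto
    then have "s + t + (\<Sum>u\<in>W. lo u) \<in> I" "s + t + (\<Sum>u\<in>W. hi u) \<in> I"
      using I1[OF s1 s2] lhW by auto
    then show "measure_pmf.expectation (Pi_pmf W 0 P) (\<lambda>x. f (s + t + (\<Sum>u\<in>W. x u)))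
        \<le> measure_pmf.expectation (Pi_pmf W 0 Q) (\<lambda>x. f (s + t + (\<Sum>u\<in>W. x u)))"
      by (rule insert.IH[of "s + t"]) (simp_all add: insert.prems(3-7))
  qed
  also have "\<dots> = measure_pmf.expectation (Pi_pmf W 0 Q) (\<lambda>x. measure_pmf.expectation (P a) (\<lambda>t. f ((s + (\<Sum>u\<in>W. x u)) + t)))"
    by (subst expect_swap[OF finPa finQW]) (simp only: ac_simps)
  also have "\<dots> \<le> measure_pmf.expectation (Pi_pmf W 0 Q) (\<lambda>x. measure_pmf.expectation (Q a) (\<lambda>t. f ((s + (\<Sum>u\<in>W. x u)) + t)))"
  proof (rule expect_mono[OF finQW])
    fix y assume y: "y \<in> set_pmf (Pi_pmf W 0 Q)"
    have "(\<Sum>u\<in>W. lo u) \<le> (\<Sum>u\<in>W. y u) \<and> (\<Sum>u\<in>W. y u) \<le> (\<Sum>u\<in>W. hi u)"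
      by (rule sum_bounds_Pi[OF insert.hyps(1) _ y]) (use insert.prems(5) in auto)
    then have "(s + (\<Sum>u\<in>W. y u)) + lo a \<in> I" "(s + (\<Sum>u\<in>W. y u)) + hi a \<in> I"
      using I1[OF s1 s2] lha by auto
    then show "measure_pmf.expectation (P a) (\<lambda>t. f ((s + (\<Sum>u\<in>W. y u)) + t))
        \<le> measure_pmf.expectation (Q a) (\<lambda>t. f ((s + (\<Sum>u\<in>W. y u)) + t))"
      using insert.prems(7) by auto
  qed
  also have "\<dots> = measure_pmf.expectation (Q a) (\<lambda>t. measure_pmf.expectation (Pi_pmf W 0 Q) (\<lambda>x. f (s + t + (\<Sum>u\<in>W. x u))))"
    by (subst expect_swap[OF finQW finQa]) (simp only: ac_simps)
  also have "\<dots> = measure_pmf.expectation (Pi_pmf (insert a W) 0 Q) (\<lambda>x. f (s + (\<Sum>u\<in>insert a W. x u)))"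
    by (rule decomp[OF finQa finQW, symmetric])
  finally show ?case .
qed



lemma bern_True: "True \<in> set_pmf (bernoulli_pmf p) \<longleftrightarrow> 0 < p \<and> p \<le> 1 \<or> p > 1"
  if "0 \<le> p" "p \<le> 1" for p :: real
  using that by (auto simp: set_pmf_iff)

lemma bern_False: "False \<in> set_pmf (bernoulli_pmf p)"
  if "0 \<le> p" "p < 1" for p :: real
  using that by (auto simp: set_pmf_iff)

theorem lemma10:
  fixes V A B :: "'a set" and d lam :: "'a \<Rightarrow> int" and f :: "real \<Rightarrow> real" and I :: "real set"
  assumes "finite V" and "A \<union> B = V" and "A \<inter> B = {}"
    and "\<And>u. u \<in> V \<Longrightarrow> d u \<ge> 1"
    and "\<And>u. u \<in> V \<Longrightarrow> 0 \<le> lam u \<and> lam u \<le> d u"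
    and "is_interval I" and "concave_on I f" and "continuous_on I f"
    and "\<And>x. x \<in> set_pmf (Pi_pmf V 0 (Xdist B d lam)) \<Longrightarrow> (\<Sum>u\<in>V. x u) \<in> I"
    and "\<And>y. y \<in> set_pmf (Pi_pmf V 0 (Ydist B d lam)) \<Longrightarrow> (\<Sum>u\<in>V. y u) \<in> I"
  shows "measure_pmf.expectation (Pi_pmf V 0 (Xdist B d lam)) (\<lambda>x. f (\<Sum>u\<in>V. x u))
         \<le> measure_pmf.expectation (Pi_pmf V 0 (Ydist B d lam)) (\<lambda>y. f (\<Sum>u\<in>V. y u))"
proof -
  define lo :: "'a \<Rightarrow> real" where "lo u = (if u \<in> B \<or> lam u = 0 then 0 else - real_of_int (d u))" for u
  define hi :: "'a \<Rightarrow> real" where "hi u = (if u \<in> B \<and> lam u \<noteq> 0 then real_of_int (d u) else 0)" for u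
  define p :: "'a \<Rightarrow> real" where "p u = real_of_int (lam u) / (2 * real_of_int (d u))" for u
  have p01: "0 \<le> p u" "p u < 1" if "u \<in> V" for u
  proof -
    have "d u \<ge> 1" "0 \<le> lam u" "lam u \<le> d u" using assms(4,5) that by auto
    then show "0 \<le> p u" "p u < 1" unfolding p_def by (auto simp: field_simps)
  qed
  have pT: "True \<in> set_pmf (bernoulli_pmf (p u)) \<longleftrightarrow> lam u \<noteq> 0" if "u \<in> V" for u
  proof -
    have "d u \<ge> 1" "0 \<le> lam u" using assms(4,5) that by auto
    then have "0 < p u \<longleftrightarrow> lam u \<noteq> 0" unfolding p_def by (auto simp: field_simps)
    then show ?thesis using bern_True[of "p u"] p01[OF that] by auto
  qed
  have pF: "False \<in> set_pmf (bernoulli_pmf (p u))" if "u \<in> V" for u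
    using bern_False p01[OF that] by auto
  have setX: "set_pmf (Xdist B d lam u) = (\<lambda>b. if b then (if u \<in> B then real_of_int (d u) else - real_of_int (d u)) else 0) ` set_pmf (bernoulli_pmf (p u))" for u
    unfolding Xdist_def p_def by simp
  have setY: "set_pmf (Ydist B d lam u) = (if u \<in> B then (\<lambda>b. if b then real_of_int (lam u) else 0) ` set_pmf (bernoulli_pmf (1/2))
      else (\<lambda>b. if b then - real_of_int (d u) else 0) ` set_pmf (bernoulli_pmf (p u)))" for u
    unfolding Ydist_def p_def by simp
  have fin: "finite (set_pmf (Xdist B d lam u)) \<and> finite (set_pmf (Ydist B d lam u))" for u
    unfolding setX setY by auto
  have bX: "lo u \<le> x \<and> x \<le> hi u" if "u \<in> V" "x \<in> set_pmf (Xdist B d lam u)" for u x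
  proof -
    have "d u \<ge> 1" "0 \<le> lam u" using assms(4,5) that(1) by auto
    then show ?thesis using that(2) pT[OF that(1)] unfolding setX lo_def hi_def by auto
  qed
  have bY: "lo u \<le> x \<and> x \<le> hi u" if "u \<in> V" "x \<in> set_pmf (Ydist B d lam u)" for u x
  proof -
    have "d u \<ge> 1" "0 \<le> lam u" "lam u \<le> d u" using assms(4,5) that(1) by auto
    then show ?thesis using that(2) pT[OF that(1)] unfolding setY lo_def hi_def
      by (auto split: if_splits)
  qed
  have lh: "lo u \<le> hi u" if "u \<in> V" for u
    using assms(4)[OF that] unfolding lo_def hi_def by auto
  have one: "measure_pmf.expectation (Xdist B d lam u) (\<lambda>t. f (c + t))
      \<le> measure_pmf.expectation (Ydist B d lam u) (\<lambda>t. f (c + t))"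
    if u: "u \<in> V" and c1: "c + lo u \<in> I" and c2: "c + hi u \<in> I" for u c
  proof (cases "u \<in> B")
    case False
    then have "Xdist B d lam u = Ydist B d lam u" unfolding Xdist_def Ydist_def by simp
    then show ?thesis by simp
  next
    case True
    have d1: "d u \<ge> 1" and l0: "0 \<le> lam u" and ld: "lam u \<le> d u" using assms(4,5) u by auto
    have EX: "measure_pmf.expectation (Xdist B d lam u) (\<lambda>t. f (c + t))
        = f (c + real_of_int (d u)) * p u + f c * (1 - p u)"
      unfolding Xdist_def p_def[symmetric] using True p01[OF u] by simp
    have EY: "measure_pmf.expectation (Ydist B d lam u) (\<lambda>t. f (c + t))
        = f (c + real_of_int (lam u)) * (1/2) + f c * (1/2)"
      unfolding Ydist_def using True by simp
    show ?thesis
    proof (cases "lam u = 0")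
      case True
      then show ?thesis unfolding EX EY p_def by simp
    next
      case False
      have cI: "c \<in> I" and cdI: "c + real_of_int (d u) \<in> I"
        using c1 c2 False \<open>u \<in> B\<close> unfolding lo_def hi_def by auto
      define t where "t = real_of_int (lam u) / real_of_int (d u)"
      have t0: "0 \<le> t" "t \<le> 1" using d1 l0 ld unfolding t_def by (auto simp: field_simps)
      have key: "f ((1 - t) *\<^sub>R c + t *\<^sub>R (c + real_of_int (d u))) \<ge> (1 - t) * f c + t * f (c + real_of_int (d u))"
        by (rule concave_onD[OF assms(7) t0 cI cdI])
      have pt: "(1 - t) *\<^sub>R c + t *\<^sub>R (c + real_of_int (d u)) = c + real_of_int (lam u)"
        using d1 unfolding t_def by (simp add: field_simps)
      have ptt: "p u = t / 2" unfolding p_def t_def by simp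
      show ?thesis unfolding EX EY ptt using key unfolding pt by (simp add: algebra_simps)
    qed
  qed
  define x0 where "x0 u = (if u \<in> V then lo u else 0)" for u
  define x1 where "x1 u = (if u \<in> V then hi u else 0)" for u
  have "x0 \<in> set_pmf (Pi_pmf V 0 (Xdist B d lam))"
  proof -
    have "lo u \<in> set_pmf (Xdist B d lam u)" if "u \<in> V" for u
      unfolding setX lo_def using pT[OF that] pF[OF that]
      by (auto simp: image_iff intro: bexI[of _ True] bexI[of _ False])
    then show ?thesis unfolding set_Pi_pmf[OF assms(1)] PiE_dflt_def x0_def by auto
  qed
  then have lo_in: "0 + (\<Sum>u\<in>V. lo u) \<in> I" using assms(9)[of x0] unfolding x0_def by simp
  have "x1 \<in> set_pmf (Pi_pmf V 0 (Xdist B d lam))"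
  proof -
    have "hi u \<in> set_pmf (Xdist B d lam u)" if "u \<in> V" for u
      unfolding setX hi_def using pT[OF that] pF[OF that]
      by (auto simp: image_iff intro: bexI[of _ True] bexI[of _ False])
    then show ?thesis unfolding set_Pi_pmf[OF assms(1)] PiE_dflt_def x1_def by auto
  qed
  then have hi_in: "0 + (\<Sum>u\<in>V. hi u) \<in> I" using assms(9)[of x1] unfolding x1_def by simp
  have "measure_pmf.expectation (Pi_pmf V 0 (Xdist B d lam)) (\<lambda>x. f (0 + (\<Sum>u\<in>V. x u)))
         \<le> measure_pmf.expectation (Pi_pmf V 0 (Ydist B d lam)) (\<lambda>y. f (0 + (\<Sum>u\<in>V. y u)))"
    by (rule main_ind[where lo = lo and hi = hi, OF assms(1) assms(6) fin bX bY lh one lo_in hi_in])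
  then show ?thesis by simp
qed

end
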